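(* Let $\mathcal P$ be a 2-reflex orthostack made of three bricks with canonical contact rectangles and signature $\sqcup_i\sqcap_j$ for some types $i,j\in\{1,2,3,4\}$. Then $\mathcal P$ is guarded by a single horizontal closed face guard which is neither the topmost nor the bottommost horizontal face of $\mathcal P$ (namely, one of the two horizontal faces bordering the middle brick).
   Context: A 2-reflex orthostack is an orthogonal polyhedron with no reflex edge parallel to the vertical ($z$) axis all of whose horizontal cross-sections are simply connected; it is a stack of bricks $B_t=R_t\times[z_{t-1},z_t]$, $t=1,\dots,k$ (bottom to top), $z_0<\dots<z_k$, each $R_t$ an axis-parallel rectangle, $R_t\ne R_{t+1}$. The contact rectangle between $B_t$ and $B_{t+1}$ is $(R_t\cap R_{t+1})\times\{z_t\}$; it is canonical if one of $R_t,R_{t+1}$ is strictly contained in the other and their set difference is connected. The type of a canonical contact rectangle is the number $i\in\{1,2,3,4\}$ of sides of the smaller rectangle not contained in the boundary of the larger one. The contact is denoted $\sqcup_i$ if $R_t\subsetneq R_{t+1}$ and $\sqcap_i$ if $R_{t+1}\subsetneq R_t$. The signature is the sequence of these symbols for $t=1,\dots,k-1$, read bottom to top. A point $x$ is visible to $y$ if segment $xy$ does not meet the exterior of the polyhedron; a closed face guard is a face including its boundary; it guards the polyhedron if every point is visible from some point of it. A face is horizontal if orthogonal to the $z$-axis. *)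

theory Defs
  imports "HOL-Analysis.Analysis"
begin

type_synonym rect = "real \<times> real \<times> real \<times> real"

definition valid_rect :: "rect \<Rightarrow> bool" where
  "valid_rect r = (case r of (a,b,c,d) \<Rightarrow> a < b \<and> c < d)"

definition rset :: "rect \<Rightarrow> (real \<times> real) set" where
  "rset r = (case r of (a,b,c,d) \<Rightarrow> {a..b} \<times> {c..d})"

definition rsides :: "rect \<Rightarrow> (real \<times> real) set list" where
  "rsides r = (case r of (a,b,c,d) \<Rightarrow>
     [{a..b} \<times> {c}, {a..b} \<times> {d}, {a} \<times> {c..d}, {b} \<times> {c..d}])"

definition canonical_contact :: "rect \<Rightarrow> rect \<Rightarrow> bool" where
  "canonical_contact small large =
     (rset small \<subset> rset large \<and> connected (rset large - rset small))"

definition contact_type :: "rect \<Rightarrow> rect \<Rightarrow> nat" where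
  "contact_type small large =
     length (filter (\<lambda>s. \<not> s \<subseteq> frontier (rset large)) (rsides small))"

definition brick :: "rect \<Rightarrow> real \<Rightarrow> real \<Rightarrow> (real \<times> real \<times> real) set" where
  "brick r z0 z1 = {(x,y,z). (x,y) \<in> rset r \<and> z0 \<le> z \<and> z \<le> z1}"

definition at_height :: "(real \<times> real) set \<Rightarrow> real \<Rightarrow> (real \<times> real \<times> real) set" where
  "at_height S h = {(x,y,z). (x,y) \<in> S \<and> z = h}"

definition visible :: "(real \<times> real \<times> real) set \<Rightarrow> real \<times> real \<times> real \<Rightarrow> real \<times> real \<times> real \<Rightarrow> bool" where
  "visible P x y = (closed_segment x y \<subseteq> P)"

definition guards :: "(real \<times> real \<times> real) set \<Rightarrow> (real \<times> real \<times> real) set \<Rightarrow> bool" where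
  "guards G P = (\<forall>p\<in>P. \<exists>g\<in>G. visible P g p)"

end

theory Submission
  imports Defs
begin

definition box3 :: "(real \<times> real) set \<Rightarrow> real \<Rightarrow> real \<Rightarrow> (real \<times> real \<times> real) set" where
  "box3 A lo hi = {(x,y,z). (x,y) \<in> A \<and> lo \<le> z \<and> z \<le> hi}"

lemma convex_box3:
  assumes A: "convex A" shows "convex (box3 A lo hi)"
proof (rule convexI)
  fix p q :: "real \<times> real \<times> real" and u v :: real
  assume p: "p \<in> box3 A lo hi" and q: "q \<in> box3 A lo hi" and u: "0 \<le> u" and v: "0 \<le> v" and uv: "u + v = 1"
  obtain x y z where pe: "p = (x,y,z)" by (cases p) auto
  obtain x' y' z' where qe: "q = (x',y',z')" by (cases q) auto
  have "u *\<^sub>R (x,y) + v *\<^sub>R (x',y') \<in> A"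
    using p q u v uv pe qe by (intro convexD[OF A]) (auto simp: box3_def)
  moreover have "u *\<^sub>R z + v *\<^sub>R z' \<in> {lo..hi}"
    using p q u v uv pe qe by (intro convexD[OF convex_real_interval(5)]) (auto simp: box3_def)
  ultimately show "u *\<^sub>R p + v *\<^sub>R q \<in> box3 A lo hi"
    using pe qe by (auto simp: box3_def)
qed

lemma brick_box3: "brick r a b = box3 (rset r) a b"
  by (simp add: brick_def box3_def)

lemma rset_convex: "convex (rset r)"
  by (cases r) (auto simp: rset_def intro!: convex_Times)

lemma rset_closed: "closed (rset r)"
  by (cases r) (auto simp: rset_def intro!: closed_Times)

lemma rset_ne: "valid_rect r \<Longrightarrow> rset r \<noteq> {}"
  by (cases r) (auto simp: rset_def valid_rect_def)

lemma key:
  fixes A B :: "(real \<times> real) set"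
  assumes sub: "A \<subset> B" and ne: "A \<noteq> {}" and cA: "closed A" and cvB: "convex B"
  shows "\<exists>g\<in>A. g \<in> closure (B - A)"
proof (rule ccontr)
  assume H: "\<not> ?thesis"
  obtain p where p: "p \<in> A" using ne by auto
  obtain q where q: "q \<in> B" "q \<notin> A" using sub by auto
  have pB: "p \<in> B" using p sub by auto
  let ?S = "closed_segment p q"
  have Ssub: "?S \<subseteq> B" using pB q(1) cvB by (simp add: closed_segment_subset)
  have "A \<inter> ?S = {} \<or> closure (B - A) \<inter> ?S = {}"
  proof (rule connected_closedD)
    show "connected ?S" by (meson convex_connected convex_closed_segment)
    show "A \<inter> closure (B - A) \<inter> ?S = {}" using H by auto
    show "?S \<subseteq> A \<union> closure (B - A)" using Ssub closure_subset by blast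
  qed (use cA in auto)
  moreover have "p \<in> A \<inter> ?S" using p by auto
  moreover have "q \<in> closure (B - A) \<inter> ?S" using q closure_subset[of "B - A"] by auto
  ultimately show False by blast
qed

lemma seg_in:
  assumes "convex S" "a \<in> S" "b \<in> S" "S \<subseteq> P" shows "visible P a b"
  using assms closed_segment_subset unfolding visible_def by blast

theorem mainTheorem9:
  fixes r1 r2 r3 :: rect and z0 z1 z2 z3 :: real and i j :: nat
  assumes "valid_rect r1" "valid_rect r2" "valid_rect r3"
    and "z0 < z1" "z1 < z2" "z2 < z3"
    and "canonical_contact r1 r2" "contact_type r1 r2 = i" "i \<in> {1,2,3,4}"
    and "canonical_contact r3 r2" "contact_type r3 r2 = j" "j \<in> {1,2,3,4}"
    and "P = brick r1 z0 z1 \<union> brick r2 z1 z2 \<union> brick r3 z2 z3"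
  shows "guards (at_height (closure (rset r2 - rset r1)) z1) P \<or>
         guards (at_height (closure (rset r2 - rset r3)) z2) P"
proof -
  let ?R1 = "rset r1" and ?R2 = "rset r2" and ?R3 = "rset r3"
  have s1: "?R1 \<subset> ?R2" and s3: "?R3 \<subset> ?R2"
    using assms(7,10) by (auto simp: canonical_contact_def)
  have Pe: "P = box3 ?R1 z0 z1 \<union> box3 ?R2 z1 z2 \<union> box3 ?R3 z2 z3"
    using assms(13) by (simp add: brick_box3)
  have cv: "\<And>r lo hi. convex (box3 (rset r) lo hi)" by (simp add: convex_box3 rset_convex)
  have cl2: "closure (?R2 - X) \<subseteq> ?R2" for X
    using rset_closed closure_minimal by blast
  show ?thesis
  proof (cases "\<exists>g\<in>?R3. g \<in> closure (?R2 - ?R1)")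
    case True
    then obtain g3 where g3: "g3 \<in> ?R3" "g3 \<in> closure (?R2 - ?R1)" by blast
    obtain g1 where g1: "g1 \<in> ?R1" "g1 \<in> closure (?R2 - ?R1)"
      using key[OF s1 rset_ne[OF assms(1)] rset_closed rset_convex] by blast
    obtain a1 b1 where ge1: "g1 = (a1,b1)" by (cases g1)
    obtain a3 b3 where ge3: "g3 = (a3,b3)" by (cases g3)
    have G1: "(a1,b1,z1) \<in> at_height (closure (?R2 - ?R1)) z1" using g1 ge1 by (simp add: at_height_def)
    have G3: "(a3,b3,z1) \<in> at_height (closure (?R2 - ?R1)) z1" using g3 ge3 by (simp add: at_height_def)
    have "guards (at_height (closure (?R2 - ?R1)) z1) P"
      unfolding guards_def
    proof
      fix p assume "p \<in> P"
      then consider "p \<in> box3 ?R1 z0 z1" | "p \<in> box3 ?R2 z1 z2" | "p \<in> box3 ?R3 z2 z3"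
        using Pe by blast
      then show "\<exists>g\<in>at_height (closure (?R2 - ?R1)) z1. visible P g p"
      proof cases
        case 1
        have "visible P (a1,b1,z1) p"
          by (rule seg_in[OF cv]) (use 1 g1 ge1 assms(4) Pe in \<open>auto simp: box3_def\<close>)
        then show ?thesis using G1 by blast
      next
        case 2
        have "visible P (a1,b1,z1) p"
          by (rule seg_in[OF cv]) (use 2 g1 ge1 s1 assms(5) Pe in \<open>auto simp: box3_def\<close>)
        then show ?thesis using G1 by blast
      next
        case 3
        have sub: "box3 ?R3 z1 z3 \<subseteq> P"
          using s3 Pe by (auto simp: box3_def)
        have "visible P (a3,b3,z1) p"
          by (rule seg_in[OF cv _ _ sub]) (use 3 g3 ge3 assms(5) in \<open>auto simp: box3_def\<close>)
        then show ?thesis using G3 by blast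
      qed
    qed
    then show ?thesis by blast
  next
    case False
    have R31: "?R3 \<subseteq> ?R1"
    proof
      fix x assume x: "x \<in> ?R3"
      show "x \<in> ?R1"
      proof (rule ccontr)
        assume "x \<notin> ?R1"
        then have "x \<in> closure (?R2 - ?R1)" using x s3 closure_subset by blast
        then show False using False x by blast
      qed
    qed
    obtain g where g: "g \<in> ?R3" "g \<in> closure (?R2 - ?R3)"
      using key[OF s3 rset_ne[OF assms(3)] rset_closed rset_convex] by blast
    obtain a b where ge: "g = (a,b)" by (cases g)
    have G: "(a,b,z2) \<in> at_height (closure (?R2 - ?R3)) z2" using g ge by (simp add: at_height_def)
    have "guards (at_height (closure (?R2 - ?R3)) z2) P"
      unfolding guards_def
    proof
      fix p assume "p \<in> P"
      then consider "p \<in> box3 ?R1 z0 z1" | "p \<in> box3 ?R2 z1 z2" | "p \<in> box3 ?R3 z2 z3"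
        using Pe by blast
      then show "\<exists>g\<in>at_height (closure (?R2 - ?R3)) z2. visible P g p"
      proof cases
        case 1
        have sub: "box3 ?R1 z0 z2 \<subseteq> P"
          using s1 Pe by (auto simp: box3_def)
        have "visible P (a,b,z2) p"
          by (rule seg_in[OF cv _ _ sub]) (use 1 g ge R31 assms(4,5) in \<open>auto simp: box3_def\<close>)
        then show ?thesis using G by blast
      next
        case 2
        have "visible P (a,b,z2) p"
          by (rule seg_in[OF cv]) (use 2 g ge s3 assms(5) Pe in \<open>auto simp: box3_def\<close>)
        then show ?thesis using G by blast
      next
        case 3
        have "visible P (a,b,z2) p"
          by (rule seg_in[OF cv]) (use 3 g ge assms(6) Pe in \<open>auto simp: box3_def\<close>)
        then show ?thesis using G by blast
      qed
    qed
    then show ?thesis by blast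
  qed
qed

end
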